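(* Let $S$ be a set of $n\ge 3$ points in the plane in general position (no four points of $S$ cocircular, no three collinear), and assume $n$ is odd. Then the reduced Euler characteristic of the Voronoi poset of $S$ vanishes: $$\tilde\chi(\Pi(S)) := \sum_{i=-1}^{n-1}(-1)^i \bar f_i = 0,$$ where $\bar f_i$ is the number of elements of $\Pi(S)$ of cardinality $i+1$.
   Context: For points $x,y$ in the plane let $h(x,y)=\{p\in\mathbb{R}^2 : d(x,p)\le d(y,p)\}$. For $A\subseteq S$ let $V(A)=\bigcap_{x\in A,\,y\in S\setminus A} h(x,y)$ (equal to $\mathbb{R}^2$ when $A=\emptyset$). The Voronoi poset $\Pi(S)$ is the set of all subsets $A\subseteq S$ (of any size $0\le|A|\le n$) with $V(A)\ne\emptyset$, ordered by inclusion (with points identified with labels in $[n]$). Thus $\bar f_{-1}=1$ (the empty set) and, for $1\le k\le n$, $\bar f_{k-1}$ equals the number of regions of the $k$-th order Voronoi diagram. *)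

theory Defs
  imports "HOL-Analysis.Analysis"
begin

type_synonym point = "real^2"

definition halfplane :: "point \<Rightarrow> point \<Rightarrow> point set" where
  "halfplane x y = {p. dist x p \<le> dist y p}"

definition voronoi_region :: "point set \<Rightarrow> point set \<Rightarrow> point set" where
  "voronoi_region S A = (\<Inter>x\<in>A. \<Inter>y\<in>S - A. halfplane x y)"

definition voronoi_poset :: "point set \<Rightarrow> point set set" where
  "voronoi_poset S = {A. A \<subseteq> S \<and> voronoi_region S A \<noteq> {}}"

definition fbar :: "point set \<Rightarrow> int \<Rightarrow> nat" where
  "fbar S i = card {A \<in> voronoi_poset S. int (card A) = i + 1}"

definition reduced_euler_char :: "point set \<Rightarrow> real" where
  "reduced_euler_char S = (\<Sum>i\<in>{-1..int (card S) - 1}. (-1) powi i * real (fbar S i))"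

definition no_three_collinear :: "point set \<Rightarrow> bool" where
  "no_three_collinear S \<longleftrightarrow> (\<forall>a\<in>S. \<forall>b\<in>S. \<forall>c\<in>S.
     a \<noteq> b \<and> a \<noteq> c \<and> b \<noteq> c \<longrightarrow> \<not> collinear {a, b, c})"

definition no_four_cocircular :: "point set \<Rightarrow> bool" where
  "no_four_cocircular S \<longleftrightarrow> (\<forall>a\<in>S. \<forall>b\<in>S. \<forall>c\<in>S. \<forall>d\<in>S.
     distinct [a, b, c, d] \<longrightarrow> \<not> (\<exists>z r. {a, b, c, d} \<subseteq> sphere z r))"

end

theory Submission
  imports Defs
begin

lemma dist2: "(dist (x::real^2) y)^2 = (x$1-y$1)^2 + (x$2-y$2)^2"
  by (simp add: dist_vec_def L2_set_def sum_2 dist_real_def)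

definition det3 :: "point \<Rightarrow> point \<Rightarrow> point \<Rightarrow> real" where
  "det3 x y z = (x$1 - y$1)*(x$2 - z$2) - (x$2 - y$2)*(x$1 - z$1)"

lemma det3_col: fixes x y z :: "real^2"
  assumes "det3 x y z = 0"
  shows "collinear {x,y,z}"
proof (cases "x = y")
  case True then show ?thesis by (simp add: collinear_2)
next
  case False
  then have ne: "x$1 \<noteq> y$1 \<or> x$2 \<noteq> y$2" by (metis exhaust_2 vec_eq_iff)
  obtain l where l: "z$1 - x$1 = l*(y$1-x$1)" "z$2 - x$2 = l*(y$2-x$2)"
  proof (cases "x$1 \<noteq> y$1")
    case True
    define l where "l = (z$1 - x$1)/(y$1-x$1)"
    have a: "z$1 - x$1 = l*(y$1-x$1)" using True by (simp add: l_def)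
    have "(z$2 - x$2)*(y$1-x$1) = l*(y$2-x$2)*(y$1-x$1)"
      using assms a unfolding det3_def by algebra
    then show ?thesis using that a True by simp
  next
    case False
    then have F: "x$2 \<noteq> y$2" using ne by simp
    define l where "l = (z$2 - x$2)/(y$2-x$2)"
    have a: "z$2 - x$2 = l*(y$2-x$2)" using F by (simp add: l_def)
    have "(z$1 - x$1)*(y$2-x$2) = l*(y$1-x$1)*(y$2-x$2)"
      using assms a unfolding det3_def by algebra
    then show ?thesis using that a F by simp
  qed
  have "z = x + l *\<^sub>R (y - x)" using l by (simp add: vec_eq_iff forall_2 algebra_simps)
  moreover have "x = x + 0 *\<^sub>R (y - x)" "y = x + 1 *\<^sub>R (y - x)" by simp_all
  ultimately have "\<forall>w\<in>{x,y,z}. \<exists>c. w = x + c *\<^sub>R (y - x)" by blast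
  then show ?thesis unfolding collinear_alt by blast
qed

lemma det3_nz:
  assumes "no_three_collinear S" "x\<in>S" "y\<in>S" "z\<in>S" "x\<noteq>y" "x\<noteq>z" "y\<noteq>z"
  shows "det3 x y z \<noteq> 0"
  using assms det3_col unfolding no_three_collinear_def by blast

lemma small_t:
  fixes a b :: "'i \<Rightarrow> real"
  assumes "finite I" "\<forall>i\<in>I. 0 < b i" "\<forall>i\<in>I. 0 \<le> a i"
  shows "\<exists>t>0. \<forall>i\<in>I. t * a i < b i"
  using assms
proof (induction I rule: finite_induct)
  case empty then show ?case by (auto intro: exI[of _ 1])
next
  case (insert j I)
  then obtain t where t: "t > 0" "\<forall>i\<in>I. t * a i < b i" by auto
  define t' where "t' = min t (b j / (a j + 1))"
  have bj: "b j > 0" "a j \<ge> 0" using insert by auto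
  have "t' > 0" using t bj by (simp add: t'_def)
  moreover have "t' * a j < b j"
  proof -
    have "t' * a j \<le> (b j / (a j + 1)) * a j"
      using bj by (intro mult_right_mono) (auto simp: t'_def)
    also have "\<dots> < b j" using bj by (simp add: field_simps)
    finally show ?thesis .
  qed
  moreover have "\<forall>i\<in>I. t' * a i < b i"
  proof
    fix i assume "i \<in> I"
    then have "t' * a i \<le> t * a i" using insert.prems by (intro mult_right_mono) (auto simp: t'_def)
    then show "t' * a i < b i" using t \<open>i\<in>I\<close> by fastforce
  qed
  ultimately show ?case by auto
qed

lemma m2_zero: "(-2::real) * a = 0 \<Longrightarrow> a = 0" by simp

definition lin2 :: "real \<Rightarrow> real \<Rightarrow> real \<Rightarrow> real \<Rightarrow> bool" where
  "lin2 a b u w \<longleftrightarrow> a*u + b*w = 0"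

lemma lin2_unique:
  assumes "lin2 a b u w" "lin2 c d u w" "a*d - b*c \<noteq> 0"
  shows "u = 0 \<and> w = 0"
proof -
  have "u*(a*d - b*c) = d*(a*u+b*w) - b*(c*u+d*w)" by (simp add: algebra_simps)
  also have "\<dots> = 0" using assms unfolding lin2_def by simp
  finally have 1: "u = 0" using assms(3) by simp
  have "w*(a*d - b*c) = a*(c*u+d*w) - c*(a*u+b*w)" by (simp add: algebra_simps)
  also have "\<dots> = 0" using assms unfolding lin2_def by simp
  finally have "w = 0" using assms(3) by simp
  with 1 show ?thesis by simp
qed

lemma three_elems:
  assumes "3 \<le> card A"
  shows "\<exists>x y z. x\<in>A \<and> y\<in>A \<and> z\<in>A \<and> x\<noteq>y \<and> x\<noteq>z \<and> y\<noteq>z"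
proof -
  obtain B where "B \<subseteq> A" "card B = 3" using obtain_subset_with_card_n[OF assms] by metis
  then show ?thesis unfolding card_3_iff by blast
qed

lemma four_elems:
  assumes "4 \<le> card A"
  shows "\<exists>a b c d. {a,b,c,d} \<subseteq> A \<and> distinct [a,b,c,d]"
proof -
  obtain B where B: "B \<subseteq> A" "card B = Suc 3" using obtain_subset_with_card_n[OF assms] by force
  then obtain a B' where "B = insert a B'" "a \<notin> B'" "card B' = 3" unfolding card_Suc_eq by blast
  then obtain x y z where "B' = {x,y,z}" "x \<noteq> y" "y \<noteq> z" "x \<noteq> z" unfolding card_3_iff by blast
  then show ?thesis using B \<open>B = insert a B'\<close> \<open>a \<notin> B'\<close>
    by (rule_tac x=a in exI, rule_tac x=x in exI, rule_tac x=y in exI, rule_tac x=z in exI) auto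
qed

lemma le2_elems:
  assumes "finite Z" "card Z \<le> 2"
  shows "\<exists>a b. Z \<subseteq> {a,b}"
proof -
  have "card Z = 0 \<or> card Z = 1 \<or> card Z = 2" using assms(2) by linarith
  then show ?thesis
  proof (elim disjE)
    assume "card Z = 0" then show ?thesis using assms(1) by simp
  next
    assume "card Z = 1" then show ?thesis by (auto simp: card_1_singleton_iff)
  next
    assume "card Z = 2" then show ?thesis by (auto simp: card_2_iff)
  qed
qed

lemma parity_symdiff:
  assumes "finite A" "finite T" "card T = 3"
  shows "(-1::real)^card ((A - T) \<union> (T - A)) = - ((-1)^card A)"
proof -
  have c1: "card ((A - T) \<union> (T - A)) = card (A - T) + card (T - A)"
    using assms by (intro card_Un_disjoint) auto
  have "A = (A - T) \<union> (A \<inter> T)" by auto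
  then have c2: "card A = card (A - T) + card (A \<inter> T)"
    using assms by (metis card_Un_disjoint Diff_disjoint Int_Diff_disjoint finite_Diff finite_Int Int_commute inf.commute)
  have "T = (T - A) \<union> (A \<inter> T)" by auto
  then have c3: "card T = card (T - A) + card (A \<inter> T)"
    using assms by (metis card_Un_disjoint Diff_disjoint Int_Diff_disjoint finite_Diff finite_Int Int_commute inf.commute)
  have "even (card ((A - T) \<union> (T - A))) \<longleftrightarrow> odd (card A)"
    using c1 c2 c3 assms(3) by presburger
  then show ?thesis by (simp add: minus_one_power_iff)
qed

type_synonym st = "real \<times> real \<times> real"

locale vor =
  fixes S :: "point set" and o1 o2 :: real
  assumes fin: "finite S" and three: "card S \<ge> 3"
    and ntc: "no_three_collinear S" and nfc: "no_four_cocircular S"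
    and gen: "\<And>x y. x\<in>S \<Longrightarrow> y\<in>S \<Longrightarrow> x\<noteq>y \<Longrightarrow> (x$1-o1)*(y$2-o2) - (y$1-o1)*(x$2-o2) \<noteq> 0"
begin

definition X where "X x = x$1 - o1"
definition Y where "Y x = x$2 - o2"
definition G :: "point \<Rightarrow> st \<Rightarrow> real" where
  "G x q = X x^2 + Y x^2 - 2*(X x * fst q + Y x * fst (snd q)) - snd (snd q)"
definition L :: "point \<Rightarrow> st \<Rightarrow> real" where
  "L x d = - 2*(X x * fst d + Y x * fst (snd d)) - snd (snd d)"
definition cc :: "st \<Rightarrow> real" where "cc q = snd (snd q)"
definition In :: "point set \<Rightarrow> st \<Rightarrow> bool" where
  "In A q \<longleftrightarrow> (\<forall>x\<in>A. G x q \<le> 0) \<and> (\<forall>y\<in>S-A. 0 \<le> G y q)"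
definition T :: "st \<Rightarrow> point set" where "T q = {x\<in>S. G x q = 0}"
definition Ray :: "real \<Rightarrow> point set \<Rightarrow> bool" where
  "Ray \<sigma> A \<longleftrightarrow> (\<exists>d. \<sigma> * cc d < 0 \<and> (\<forall>x\<in>A. L x d \<le> 0) \<and> (\<forall>y\<in>S-A. 0 \<le> L y d))"
definition Opt where "Opt \<sigma> A v \<longleftrightarrow> In A v \<and> (\<forall>q. In A q \<longrightarrow> \<sigma> * cc v \<le> \<sigma> * cc q)"

lemma G_move: "G x (q + t *\<^sub>R d) = G x q + t * L x d"
  by (simp add: G_def L_def algebra_simps)
lemma L_diff: "L x (v - q) = G x v - G x q"
  by (simp add: G_def L_def algebra_simps)
lemma cc_move: "cc (q + t *\<^sub>R d) = cc q + t * cc d"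
  by (simp add: cc_def)
lemma L_neg: "L x (- d) = - L x d" "cc (-d) = - cc d"
  by (simp_all add: L_def cc_def)

lemma T_sub: "T q \<subseteq> S" and T_fin: "finite (T q)"
  using fin by (auto simp: T_def)

lemma XY_nz: assumes "x \<in> S" shows "X x \<noteq> 0 \<or> Y x \<noteq> 0"
proof -
  have "S - {x} \<noteq> {}"
  proof
    assume "S - {x} = {}"
    then have "S \<subseteq> {x}" by auto
    then have "card S \<le> 1" using card_mono[of "{x}" S] by simp
    then show False using three by simp
  qed
  then obtain y where "y \<in> S" "y \<noteq> x" by auto
  show ?thesis
  proof (rule ccontr)
    assume "\<not> ?thesis"
    then have "x$1 - o1 = 0" "x$2 - o2 = 0" by (simp_all add: X_def Y_def)
    then show False using gen[OF assms \<open>y\<in>S\<close>] \<open>y \<noteq> x\<close> by simp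
  qed
qed

lemma G_diff: "G u q - G w q - (G u q' - G w q') =
   -2*((u$1 - w$1)*(fst q - fst q') + (u$2-w$2)*(fst (snd q) - fst (snd q')))"
  unfolding G_def X_def Y_def by (simp add: algebra_simps)

lemma T_unique:
  assumes "x \<in> T q" "y \<in> T q" "z \<in> T q" "x \<in> T q'" "y \<in> T q'" "z \<in> T q'"
    and "x\<noteq>y" "x\<noteq>z" "y\<noteq>z"
  shows "q = q'"
proof -
  have S: "x\<in>S" "y\<in>S" "z\<in>S" using assms by (auto simp: T_def)
  have D: "det3 x y z \<noteq> 0" using det3_nz[OF ntc S] assms by auto
  have e: "G x q = 0" "G y q = 0" "G z q = 0" "G x q' = 0" "G y q' = 0" "G z q' = 0"
    using assms by (auto simp: T_def)
  have "lin2 (x$1 - w$1) (x$2-w$2) (fst q - fst q') (fst (snd q) - fst (snd q'))"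
    if "G w q = 0" "G w q' = 0" for w
  proof -
    have "G x q - G w q - (G x q' - G w q') = 0" using that e by simp
    then have "-2 * ((x$1 - w$1)*(fst q - fst q') + (x$2-w$2)*(fst (snd q) - fst (snd q'))) = 0"
      by (simp only: G_diff)
    then show ?thesis unfolding lin2_def by (rule m2_zero)
  qed
  then have "lin2 (x$1 - y$1) (x$2-y$2) (fst q - fst q') (fst (snd q) - fst (snd q'))"
    "lin2 (x$1 - z$1) (x$2-z$2) (fst q - fst q') (fst (snd q) - fst (snd q'))"
    using e by auto
  then have "fst q - fst q' = 0 \<and> fst (snd q) - fst (snd q') = 0"
    using lin2_unique D unfolding det3_def by metis
  moreover have "snd (snd q) = snd (snd q')" using e(1) e(4) calculation unfolding G_def by simp
  ultimately show ?thesis by (simp add: prod_eq_iff)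
qed

lemma T_card: "card (T q) \<le> 3"
proof (rule ccontr)
  assume "\<not> ?thesis"
  then have "4 \<le> card (T q)" by simp
  then obtain a b c d where abcd: "{a,b,c,d} \<subseteq> T q" "distinct [a,b,c,d]"
    using four_elems by metis
  define P :: point where "P = vector [o1 + fst q, o2 + fst (snd q)]"
  define R where "R = sqrt (cc q + (fst q)^2 + (fst (snd q))^2)"
  have "dist P x = R" if "x \<in> T q" for x
  proof -
    have G0: "G x q = 0" using that by (simp add: T_def)
    have "(dist P x)^2 = (o1 + fst q - x$1)^2 + (o2 + fst (snd q) - x$2)^2"
      by (simp add: dist2 P_def)
    also have "\<dots> = G x q + cc q + (fst q)^2 + (fst (snd q))^2"
      unfolding G_def X_def Y_def cc_def by (simp add: power2_eq_square algebra_simps)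
    also have "\<dots> = cc q + (fst q)^2 + (fst (snd q))^2" using G0 by simp
    finally have "sqrt ((dist P x)^2) = R" unfolding R_def by simp
    then show ?thesis by simp
  qed
  then have "{a,b,c,d} \<subseteq> sphere P R" using abcd(1) by (auto simp: sphere_def)
  moreover have "a\<in>S" "b\<in>S" "c\<in>S" "d\<in>S" using abcd(1) T_sub[of q] by auto
  ultimately show False using nfc abcd(2) unfolding no_four_cocircular_def by blast
qed

lemma dir:
  assumes "card (T q) < 3" "\<sigma> = 1 \<or> \<sigma> = -1"
  shows "\<exists>d. \<sigma> * cc d < 0 \<and> (\<forall>x\<in>T q. L x d = 0)"
proof -
  have ss: "\<sigma> * \<sigma> = 1" using assms(2) by auto
  have "card (T q) = 0 \<or> card (T q) = 1 \<or> card (T q) = 2" using assms(1) by linarith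
  then show ?thesis
  proof (elim disjE)
    assume "card (T q) = 0"
    then have "T q = {}" using T_fin by simp
    then show ?thesis using ss by (intro exI[of _ "(0,0,-\<sigma>)"]) (simp add: cc_def)
  next
    assume "card (T q) = 1"
    then obtain x where x: "T q = {x}" by (auto simp: card_1_singleton_iff)
    then have "x \<in> S" using T_sub[of q] by auto
    then have pos: "0 < X x^2 + Y x^2" using XY_nz sum_power2_gt_zero_iff by blast
    define d where "d = (\<sigma> * X x, \<sigma> * Y x, -2*\<sigma>*(X x^2 + Y x^2))"
    have "L x d = 0" unfolding d_def L_def by (simp add: power2_eq_square algebra_simps)
    moreover have "\<sigma> * cc d = -2 * (\<sigma>*\<sigma>) * (X x^2 + Y x^2)"
      unfolding d_def cc_def by (simp add: algebra_simps)
    then have "\<sigma> * cc d < 0" using ss pos by simp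
    ultimately show ?thesis using x by (intro exI[of _ d]) auto
  next
    assume "card (T q) = 2"
    then obtain x y where xy: "T q = {x,y}" "x \<noteq> y" by (auto simp: card_2_iff)
    then have "x \<in> S" "y \<in> S" using T_sub[of q] by auto
    define kk where "kk = X x * Y y - X y * Y x"
    have kk: "kk \<noteq> 0" using gen[OF \<open>x\<in>S\<close> \<open>y\<in>S\<close> xy(2)] by (simp add: kk_def X_def Y_def)
    define sg where "sg = \<sigma> * kk"
    define d where "d = (- sg * (Y x - Y y), sg * (X x - X y), -2* sg*kk)"
    have "L x d = -2* sg*(X x * Y y - X y * Y x) + 2* sg*kk"
      unfolding d_def L_def by (simp add: algebra_simps)
    then have 1: "L x d = 0" by (simp add: kk_def)
    have "L y d = -2* sg*(X x * Y y - X y * Y x) + 2* sg*kk"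
      unfolding d_def L_def by (simp add: algebra_simps)
    then have 2: "L y d = 0" by (simp add: kk_def)
    have "\<sigma> * cc d = -2 * (\<sigma>*\<sigma>) * (kk*kk)"
      unfolding d_def cc_def sg_def by (simp add: algebra_simps)
    then have "\<sigma> * cc d < 0" using ss kk by (simp add: zero_less_mult_iff linorder_neq_iff; blast)
    then show ?thesis using 1 2 xy by (intro exI[of _ d]) auto
  qed
qed

lemma step:
  assumes "In A q" "card (T q) < 3" "\<sigma> = 1 \<or> \<sigma> = -1" "A \<subseteq> S"
  shows "Ray \<sigma> A \<or> (\<exists>q'. In A q' \<and> \<sigma> * cc q' < \<sigma> * cc q \<and> T q \<subset> T q')"
proof -
  obtain d where d: "\<sigma> * cc d < 0" "\<forall>x\<in>T q. L x d = 0" using dir[OF assms(2,3)] by blast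
  define bad where "bad = {s\<in>S. (s\<in>A \<and> 0 < L s d) \<or> (s\<notin>A \<and> L s d < 0)}"
  show ?thesis
  proof (cases "bad = {}")
    case True
    have "\<forall>x\<in>A. L x d \<le> 0"
    proof
      fix x assume "x \<in> A"
      then have "x \<notin> bad" using True by simp
      then show "L x d \<le> 0" using \<open>x\<in>A\<close> assms(4) unfolding bad_def by auto
    qed
    moreover have "\<forall>y\<in>S-A. 0 \<le> L y d"
    proof
      fix y assume "y \<in> S - A"
      then have "y \<notin> bad" using True by simp
      then show "0 \<le> L y d" using \<open>y\<in>S-A\<close> unfolding bad_def by auto
    qed
    ultimately have "Ray \<sigma> A" unfolding Ray_def using d(1) by blast
    then show ?thesis ..
  next
    case False
    define r where "r s = (- G s q) / L s d" for s
    define t where "t = Min (r ` bad)"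
    have finbad: "finite bad" using fin unfolding bad_def by simp
    have notT: "s \<notin> T q" if "s \<in> bad" for s
      using that d(2) unfolding bad_def by auto
    have rpos: "0 < r s" if "s \<in> bad" for s
    proof -
      have sS: "s \<in> S" using that unfolding bad_def by simp
      have Gnz: "G s q \<noteq> 0" using notT[OF that] sS unfolding T_def by simp
      show ?thesis
      proof (cases "s \<in> A")
        case True
        then have "G s q < 0" "0 < L s d" using assms(1) Gnz that unfolding In_def bad_def
          by (auto simp: order.order_iff_strict)
        then show ?thesis unfolding r_def by (simp add: divide_neg_pos)
      next
        case False
        then have "G s q > 0" "L s d < 0" using assms(1) Gnz that sS unfolding In_def bad_def
          by (auto simp: order.order_iff_strict)
        then show ?thesis unfolding r_def by (simp add: divide_pos_neg)
      qed
    qed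
    have tpos: "0 < t" unfolding t_def using finbad False rpos by (simp add: Min_gr_iff)
    have "t \<in> r ` bad" using Min_in[of "r ` bad"] finbad False unfolding t_def by blast
    then obtain s0 where s0: "s0 \<in> bad" "r s0 = t" by (metis imageE)
    have tle: "t \<le> r s" if "s \<in> bad" for s
      unfolding t_def using finbad that by simp
    define q' where "q' = q + t *\<^sub>R d"
    have G': "G s q' = G s q + t * L s d" for s unfolding q'_def by (rule G_move)
    have "In A q'" unfolding In_def
    proof (intro conjI ballI)
      fix x assume xA: "x \<in> A"
      have Gx: "G x q \<le> 0" using assms(1) xA unfolding In_def by simp
      show "G x q' \<le> 0"
      proof (cases "0 < L x d")
        case True
        then have "x \<in> bad" using xA assms(4) unfolding bad_def by auto
        then have "t \<le> (- G x q) / L x d" using tle unfolding r_def by simp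
        then have "t * L x d \<le> ((- G x q) / L x d) * L x d" using True by (intro mult_right_mono) auto
        then have "t * L x d \<le> - G x q" using True by simp
        then show ?thesis using G' by simp
      next
        case False
        then have "t * L x d \<le> 0" using tpos by (simp add: mult_nonneg_nonpos)
        then show ?thesis using G' Gx by simp
      qed
    next
      fix y assume yA: "y \<in> S - A"
      have Gy: "0 \<le> G y q" using assms(1) yA unfolding In_def by simp
      show "0 \<le> G y q'"
      proof (cases "L y d < 0")
        case True
        then have "y \<in> bad" using yA unfolding bad_def by auto
        then have "t \<le> (- G y q) / L y d" using tle unfolding r_def by simp
        then have "((- G y q) / L y d) * L y d \<le> t * L y d" using True by (intro mult_right_mono_neg) auto
        then have "- G y q \<le> t * L y d" using True by simp
        then show ?thesis using G' by simp
      next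
        case False
        then have "0 \<le> t * L y d" using tpos by simp
        then show ?thesis using G' Gy by simp
      qed
    qed
    moreover have "\<sigma> * cc q' < \<sigma> * cc q"
    proof -
      have "\<sigma> * cc q' = \<sigma> * cc q + t * (\<sigma> * cc d)" unfolding q'_def cc_move by (simp add: algebra_simps)
      moreover have "t * (\<sigma> * cc d) < 0" using tpos d(1) by (simp add: mult_pos_neg)
      ultimately show ?thesis by simp
    qed
    moreover have "T q \<subset> T q'"
    proof
      show "T q \<subseteq> T q'" using d(2) G' unfolding T_def by auto
      have s0S: "s0 \<in> S" using s0(1) unfolding bad_def by simp
      have "L s0 d \<noteq> 0" using s0(1) unfolding bad_def by auto
      moreover have "G s0 q / L s0 d = - t" using s0(2) unfolding r_def by simp
      ultimately have "G s0 q = - t * L s0 d" by (simp add: divide_eq_eq)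
      then have "G s0 q' = 0" using G'[of s0] by simp
      then have "s0 \<in> T q'" using s0S unfolding T_def by simp
      then show "T q \<noteq> T q'" using notT[OF s0(1)] by blast
    qed
    ultimately show ?thesis by blast
  qed
qed

lemma descent:
  assumes "\<sigma> = 1 \<or> \<sigma> = -1" "A \<subseteq> S"
  shows "In A q \<Longrightarrow> Ray \<sigma> A \<or> (\<exists>v. In A v \<and> 3 \<le> card (T v) \<and> \<sigma> * cc v \<le> \<sigma> * cc q)"
proof (induction "card (S - T q)" arbitrary: q rule: less_induct)
  case less
  show ?case
  proof (cases "3 \<le> card (T q)")
    case True then show ?thesis using less.prems by (intro disjI2 exI[of _ q]) simp
  next
    case False
    then have "card (T q) < 3" by simp
    from step[OF less.prems this assms(1,2)]
    consider "Ray \<sigma> A" | q' where "In A q'" "\<sigma>*cc q' < \<sigma>*cc q" "T q \<subset> T q'" by blast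
    then show ?thesis
    proof cases
      case 1 then show ?thesis ..
    next
      case 2
      have "S - T q' \<subset> S - T q" using 2(3) T_sub[of q'] by blast
      then have "card (S - T q') < card (S - T q)" using fin by (simp add: psubset_card_mono)
      from less.hyps[OF this 2(1)] show ?thesis using 2(2) by force
    qed
  qed
qed

lemma vert_fin: "finite {v. 3 \<le> card (T v)}"
proof -
  have "inj_on T {v. 3 \<le> card (T v)}"
  proof (rule inj_onI)
    fix v w assume v: "v \<in> {v. 3 \<le> card (T v)}" and "w \<in> {v. 3 \<le> card (T v)}" and e: "T v = T w"
    obtain x y z where "x\<in>T v" "y\<in>T v" "z\<in>T v" "x\<noteq>y" "x\<noteq>z" "y\<noteq>z"
      using three_elems v by force
    then show "v = w" using T_unique e by metis
  qed
  moreover have "T ` {v. 3 \<le> card (T v)} \<subseteq> Pow S" using T_sub by auto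
  then have "finite (T ` {v. 3 \<le> card (T v)})" using fin by (meson finite_Pow_iff finite_subset)
  ultimately show ?thesis using finite_imageD by blast
qed

lemma opt_exists:
  assumes "\<sigma> = 1 \<or> \<sigma> = -1" "A \<subseteq> S" "In A q0" "\<not> Ray \<sigma> A"
  shows "\<exists>v. Opt \<sigma> A v"
proof -
  define V where "V = {v. 3 \<le> card (T v) \<and> In A v}"
  have finV: "finite V" using vert_fin unfolding V_def by (rule finite_subset[rotated]) auto
  have "V \<noteq> {}" using descent[OF assms(1,2,3)] assms(4) unfolding V_def by auto
  define m where "m = Min ((\<lambda>v. \<sigma> * cc v) ` V)"
  have "m \<in> (\<lambda>v. \<sigma> * cc v) ` V"
    using Min_in[of "(\<lambda>v. \<sigma> * cc v) ` V"] finV \<open>V \<noteq> {}\<close> unfolding m_def by blast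
  then obtain v where v: "v \<in> V" "\<sigma> * cc v = m" by (metis imageE)
  have mle: "m \<le> \<sigma> * cc w" if "w \<in> V" for w unfolding m_def using finV that by (intro Min_le) auto
  have "Opt \<sigma> A v" unfolding Opt_def
  proof (intro conjI allI impI)
    show "In A v" using v(1) unfolding V_def by simp
    fix q assume "In A q"
    then obtain w where "w \<in> V" "\<sigma> * cc w \<le> \<sigma> * cc q"
      using descent[OF assms(1,2)] assms(4) unfolding V_def by blast
    then show "\<sigma> * cc v \<le> \<sigma> * cc q" using mle v(2) by fastforce
  qed
  then show ?thesis ..
qed

lemma opt_T:
  assumes "\<sigma> = 1 \<or> \<sigma> = -1" "A \<subseteq> S" "Opt \<sigma> A v" "\<not> Ray \<sigma> A"
  shows "card (T v) = 3"
proof -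
  have "3 \<le> card (T v)"
  proof (rule ccontr)
    assume "\<not> 3 \<le> card (T v)"
    then have "card (T v) < 3" by simp
    have Iv: "In A v" using assms(3) unfolding Opt_def by simp
    from step[OF Iv \<open>card (T v) < 3\<close> assms(1,2)] assms(4) obtain q' where "In A q'" "\<sigma>*cc q' < \<sigma>*cc v"
      by blast
    moreover have "\<sigma>*cc v \<le> \<sigma>*cc q'" using assms(3) \<open>In A q'\<close> unfolding Opt_def by blast
    ultimately show False by simp
  qed
  then show ?thesis using T_card[of v] by simp
qed

lemma G_mid: "G x (v + (1/2) *\<^sub>R (w - v)) = (G x v + G x w) / 2"
  unfolding G_move L_diff by (simp add: field_simps)

lemma opt_unique:
  assumes "\<sigma> = 1 \<or> \<sigma> = -1" "A \<subseteq> S" "Opt \<sigma> A v" "Opt \<sigma> A w" "\<not> Ray \<sigma> A"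
  shows "v = w"
proof -
  define m where "m = v + (1/2) *\<^sub>R (w - v)"
  have Gm: "G x m = (G x v + G x w) / 2" for x unfolding m_def by (rule G_mid)
  have Iv: "In A v" and Iw: "In A w" using assms(3,4) unfolding Opt_def by auto
  have Im: "In A m" unfolding In_def Gm
  proof (intro conjI ballI)
    fix x assume "x \<in> A"
    then have "G x v \<le> 0" "G x w \<le> 0" using Iv Iw unfolding In_def by auto
    then show "(G x v + G x w) / 2 \<le> 0" by simp
  next
    fix x assume "x \<in> S - A"
    then have "0 \<le> G x v" "0 \<le> G x w" using Iv Iw unfolding In_def by auto
    then show "0 \<le> (G x v + G x w) / 2" by simp
  qed
  have "\<sigma> * cc v \<le> \<sigma> * cc w" using assms(3) Iw unfolding Opt_def by blast
  moreover have "\<sigma> * cc w \<le> \<sigma> * cc v" using assms(4) Iv unfolding Opt_def by blast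
  ultimately have e: "\<sigma> * cc v = \<sigma> * cc w" by simp
  have "\<sigma> * cc m = (\<sigma> * cc v + \<sigma> * cc w)/2"
    unfolding m_def cc_move by (simp add: cc_def field_simps)
  also have "\<dots> = \<sigma> * cc v" unfolding e by simp
  finally have em: "\<sigma> * cc m = \<sigma> * cc v" .
  have "Opt \<sigma> A m" unfolding Opt_def
  proof (intro conjI allI impI)
    show "In A m" by (rule Im)
    fix q assume "In A q"
    then have "\<sigma>*cc v \<le> \<sigma>*cc q" using assms(3) unfolding Opt_def by blast
    then show "\<sigma> * cc m \<le> \<sigma> * cc q" using em by linarith
  qed
  then have "card (T m) = 3" using opt_T assms by blast
  then obtain x y z where xyz: "x\<in>T m" "y\<in>T m" "z\<in>T m" "x\<noteq>y" "x\<noteq>z" "y\<noteq>z"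
    using three_elems by (metis order_refl)
  have sub: "u \<in> T v \<and> u \<in> T w" if "u \<in> T m" for u
  proof -
    have uS: "u \<in> S" and "G u m = 0" using that unfolding T_def by auto
    then have s: "G u v + G u w = 0" using Gm by simp
    have "G u v = 0 \<and> G u w = 0"
    proof (cases "u \<in> A")
      case True then show ?thesis using Iv Iw s unfolding In_def by force
    next
      case False then show ?thesis using Iv Iw s uS unfolding In_def by force
    qed
    then show ?thesis using uS unfolding T_def by simp
  qed
  show ?thesis using T_unique[of x v y z w] sub xyz by blast
qed

lemma flip:
  assumes \<sigma>: "\<sigma> = 1 \<or> \<sigma> = -1" and AS: "A \<subseteq> S" and opt: "Opt \<sigma> A v" and nr: "\<not> Ray \<sigma> A"
  shows "Opt (-\<sigma>) ((A - T v) \<union> (T v - A)) v \<and> \<not> Ray (-\<sigma>) ((A - T v) \<union> (T v - A))"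
proof -
  define A' where "A' = (A - T v) \<union> (T v - A)"
  have Iv: "In A v" using opt unfolding Opt_def by simp
  have IA'v: "In A' v" unfolding In_def
  proof (intro conjI ballI)
    fix x assume "x \<in> A'"
    then show "G x v \<le> 0" using Iv unfolding A'_def In_def T_def by auto
  next
    fix y assume y: "y \<in> S - A'"
    show "0 \<le> G y v"
    proof (cases "y \<in> A")
      case True
      then have "y \<in> T v" using y unfolding A'_def by auto
      then show ?thesis unfolding T_def by simp
    next
      case False
      then show ?thesis using Iv y unfolding In_def by auto
    qed
  qed
  have key: "\<sigma> * cc q \<le> \<sigma> * cc v" if Iq: "In A' q" for q
  proof -
    have pos: "\<forall>x\<in>S - T v. 0 < \<bar>G x v\<bar>" unfolding T_def by auto
    obtain t where t: "t > 0" "\<forall>x\<in>S - T v. t * \<bar>G x v - G x q\<bar> < \<bar>G x v\<bar>"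
      using small_t[of "S - T v" "\<lambda>x. \<bar>G x v\<bar>" "\<lambda>x. \<bar>G x v - G x q\<bar>"] fin pos by auto
    define w where "w = v + t *\<^sub>R (v - q)"
    have Gw: "G x w = G x v + t * (G x v - G x q)" for x unfolding w_def G_move L_diff ..
    have bnd: "t * (G x v - G x q) \<le> t * \<bar>G x v - G x q\<bar>" for x
      using t(1) by (intro mult_left_mono) auto
    have bnd2: "- (t * \<bar>G x v - G x q\<bar>) \<le> t * (G x v - G x q)" for x
    proof -
      have "- \<bar>G x v - G x q\<bar> \<le> G x v - G x q" by simp
      then have "t * (- \<bar>G x v - G x q\<bar>) \<le> t * (G x v - G x q)" using t(1) by (intro mult_left_mono) auto
      then show ?thesis by simp
    qed
    have "In A w" unfolding In_def
    proof (intro conjI ballI)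
      fix x assume xA: "x \<in> A"
      have xS: "x \<in> S" using AS xA by auto
      show "G x w \<le> 0"
      proof (cases "x \<in> T v")
        case True
        then have Gv: "G x v = 0" unfolding T_def by simp
        have "x \<in> S - A'" using True xA xS unfolding A'_def by auto
        then have "0 \<le> G x q" using Iq unfolding In_def by auto
        then show ?thesis unfolding Gw Gv using t(1) by simp
      next
        case False
        then have "x \<in> S - T v" using xS by simp
        then have lt: "t * \<bar>G x v - G x q\<bar> < \<bar>G x v\<bar>" using t(2) by auto
        have "G x v \<le> 0" using Iv xA unfolding In_def by auto
        moreover have "G x v \<noteq> 0" using False xS unfolding T_def by simp
        ultimately have "G x v < 0" by simp
        then show ?thesis unfolding Gw using lt bnd[of x] by linarith
      qed
    next
      fix y assume yA: "y \<in> S - A"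
      show "0 \<le> G y w"
      proof (cases "y \<in> T v")
        case True
        then have Gv: "G y v = 0" unfolding T_def by simp
        have "y \<in> A'" using True yA unfolding A'_def by auto
        then have "G y q \<le> 0" using Iq unfolding In_def by auto
        then show ?thesis unfolding Gw Gv using t(1) by (simp add: mult_nonneg_nonpos)
      next
        case False
        then have "y \<in> S - T v" using yA by simp
        then have lt: "t * \<bar>G y v - G y q\<bar> < \<bar>G y v\<bar>" using t(2) by auto
        have "0 \<le> G y v" using Iv yA unfolding In_def by auto
        moreover have "G y v \<noteq> 0" using False yA unfolding T_def by simp
        ultimately have "0 < G y v" by simp
        then show ?thesis unfolding Gw using lt bnd2[of y] by linarith
      qed
    qed
    then have "\<sigma> * cc v \<le> \<sigma> * cc w" using opt unfolding Opt_def by blast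
    moreover have "\<sigma> * cc w = \<sigma> * cc v + t * (\<sigma> * cc v - \<sigma> * cc q)"
      unfolding w_def cc_move by (simp add: cc_def algebra_simps)
    ultimately have "0 \<le> t * (\<sigma> * cc v - \<sigma> * cc q)" by linarith
    then have "0 \<le> \<sigma> * cc v - \<sigma> * cc q" using t(1) by (simp add: zero_le_mult_iff)
    then show ?thesis by simp
  qed
  have o': "Opt (-\<sigma>) A' v" unfolding Opt_def
  proof (intro conjI allI impI)
    show "In A' v" by (rule IA'v)
    fix q assume "In A' q"
    then show "- \<sigma> * cc v \<le> - \<sigma> * cc q" using key by simp
  qed
  have "\<not> Ray (-\<sigma>) A'"
  proof
    assume "Ray (-\<sigma>) A'"
    then obtain d where d: "- \<sigma> * cc d < 0" "\<forall>x\<in>A'. L x d \<le> 0" "\<forall>y\<in>S-A'. 0 \<le> L y d"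
      unfolding Ray_def by blast
    have "In A' (v + 1 *\<^sub>R d)" unfolding In_def G_move
    proof (intro conjI ballI)
      fix x assume "x \<in> A'"
      then show "G x v + 1 * L x d \<le> 0" using IA'v d(2) unfolding In_def by force
    next
      fix x assume "x \<in> S - A'"
      then show "0 \<le> G x v + 1 * L x d" using IA'v d(3) unfolding In_def by force
    qed
    then have "\<sigma> * cc (v + 1 *\<^sub>R d) \<le> \<sigma> * cc v" by (rule key)
    moreover have "\<sigma> * cc (v + 1 *\<^sub>R d) = \<sigma> * cc v + \<sigma> * cc d" unfolding cc_move by (simp add: algebra_simps)
    ultimately show False using d(1) by simp
  qed
  then show ?thesis using o' unfolding A'_def by simp
qed

lemma L_diff2: "L u d - L w d = -2*((u$1 - w$1)*fst d + (u$2-w$2)*fst (snd d))"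
  unfolding L_def X_def Y_def by (simp add: algebra_simps)

lemma ray_In:
  assumes AS: "A \<subseteq> S" and R: "Ray \<sigma> A"
  shows "\<exists>q. In A q"
proof -
  obtain d where d: "\<sigma> * cc d < 0" "\<forall>x\<in>A. L x d \<le> 0" "\<forall>y\<in>S-A. 0 \<le> L y d"
    using R unfolding Ray_def by blast
  have ccd: "cc d \<noteq> 0" using d(1) by auto
  define Z where "Z = {x\<in>S. L x d = 0}"
  have "card Z \<le> 2"
  proof (rule ccontr)
    assume "\<not> card Z \<le> 2"
    then have "3 \<le> card Z" by simp
    then obtain x y z where xyz: "x\<in>Z" "y\<in>Z" "z\<in>Z" "x\<noteq>y" "x\<noteq>z" "y\<noteq>z"
      using three_elems by metis
    have S: "x\<in>S" "y\<in>S" "z\<in>S" and L0: "L x d = 0" "L y d = 0" "L z d = 0"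
      using xyz unfolding Z_def by auto
    have l: "lin2 (x$1 - w$1) (x$2 - w$2) (fst d) (fst (snd d))" if "L w d = 0" for w
    proof -
      have "L x d - L w d = 0" using that L0 by simp
      then have "-2 * ((x$1 - w$1)*fst d + (x$2-w$2)*fst (snd d)) = 0" by (simp only: L_diff2)
      then show ?thesis unfolding lin2_def by (rule m2_zero)
    qed
    have D: "det3 x y z \<noteq> 0" using det3_nz[OF ntc S] xyz by simp
    have "fst d = 0 \<and> fst (snd d) = 0"
      using lin2_unique[OF l[OF L0(2)] l[OF L0(3)]] D unfolding det3_def by metis
    then have "L x d = - cc d" unfolding L_def cc_def by simp
    then show False using L0(1) ccd by simp
  qed
  moreover have "finite Z" using fin unfolding Z_def by simp
  ultimately obtain x0 y0 where Z: "Z \<subseteq> {x0,y0}" using le2_elems by blast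
  define q0 where "q0 = ((X x0 + X y0)/2, (Y x0 + Y y0)/2, - (X x0 * X y0 + Y x0 * Y y0))"
  have Gq0: "G x0 q0 = 0" "G y0 q0 = 0" unfolding q0_def G_def by (simp_all add: power2_eq_square field_simps)
  define s where "s = (\<Sum>z\<in>S. \<bar>G z q0 / L z d\<bar>)"
  have sge: "\<bar>G z q0 / L z d\<bar> \<le> s" if "z \<in> S" for z
    unfolding s_def using fin that by (intro member_le_sum) auto
  have sge2: "- (G z q0 / L z d) \<le> s" if "z \<in> S" for z
    using sge[OF that] by linarith
  define q where "q = q0 + s *\<^sub>R d"
  have Gq: "G z q = G z q0 + s * L z d" for z unfolding q_def by (rule G_move)
  have Z0: "G z q = 0" if "z \<in> S" "L z d = 0" for z
  proof -
    have "z \<in> Z" using that unfolding Z_def by simp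
    then have "z = x0 \<or> z = y0" using Z by auto
    then have "G z q0 = 0" using Gq0 by auto
    then show ?thesis using Gq that by simp
  qed
  have "In A q" unfolding In_def
  proof (intro conjI ballI)
    fix x assume xA: "x \<in> A"
    have xS: "x \<in> S" using AS xA by auto
    have Lx: "L x d \<le> 0" using d(2) xA by auto
    show "G x q \<le> 0"
    proof (cases "L x d = 0")
      case True
      then show ?thesis using Z0 xS by simp
    next
      case False
      then have Lneg: "L x d < 0" using Lx by simp
      have "s * L x d \<le> (- (G x q0 / L x d)) * L x d"
        using Lneg sge2[OF xS] by (intro mult_right_mono_neg) auto
      then have "s * L x d \<le> - G x q0" using Lneg by simp
      then show ?thesis using Gq by simp
    qed
  next
    fix y assume yA: "y \<in> S - A"
    have Ly: "0 \<le> L y d" using d(3) yA by auto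
    show "0 \<le> G y q"
    proof (cases "L y d = 0")
      case True
      then show ?thesis using Z0 yA by simp
    next
      case False
      then have Lpos: "0 < L y d" using Ly by simp
      have "(- (G y q0 / L y d)) * L y d \<le> s * L y d"
        using Lpos sge2 yA by (intro mult_right_mono) auto
      then have "- G y q0 \<le> s * L y d" using Lpos by simp
      then show ?thesis using Gq by simp
    qed
  qed
  then show ?thesis by blast
qed

lemma ray_compl:
  assumes "A \<subseteq> S"
  shows "Ray \<sigma> A \<longleftrightarrow> Ray (-\<sigma>) (S - A)"
proof
  assume "Ray \<sigma> A"
  then obtain d where d: "\<sigma> * cc d < 0" "\<forall>x\<in>A. L x d \<le> 0" "\<forall>y\<in>S-A. 0 \<le> L y d"
    unfolding Ray_def by blast
  have "- \<sigma> * cc (-d) < 0" "\<forall>x\<in>S-A. L x (-d) \<le> 0" "\<forall>y\<in>S-(S-A). 0 \<le> L y (-d)"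
    using d by (auto simp: L_neg)
  then show "Ray (-\<sigma>) (S - A)" unfolding Ray_def by blast
next
  assume "Ray (-\<sigma>) (S - A)"
  then obtain d where d: "- \<sigma> * cc d < 0" "\<forall>x\<in>S-A. L x d \<le> 0" "\<forall>y\<in>S-(S-A). 0 \<le> L y d"
    unfolding Ray_def by blast
  have "S - (S - A) = A" using assms by auto
  then have "\<sigma> * cc (-d) < 0" "\<forall>x\<in>A. L x (-d) \<le> 0" "\<forall>y\<in>S-A. 0 \<le> L y (-d)"
    using d by (auto simp: L_neg)
  then show "Ray \<sigma> A" unfolding Ray_def by blast
qed

lemma G_c: "G x (a, b, c) = G x (a, b, 0) - c"
  by (simp add: G_def)

lemma distG: "(dist x P)^2 = G x (P$1 - o1, P$2 - o2, 0) + (P$1-o1)^2 + (P$2-o2)^2"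
  unfolding dist2 G_def X_def Y_def by (simp add: power2_eq_square algebra_simps)

lemma dist_le_G: "dist x P \<le> dist y P \<longleftrightarrow> G x (P$1 - o1, P$2 - o2, 0) \<le> G y (P$1 - o1, P$2 - o2, 0)"
proof -
  have "dist x P \<le> dist y P \<longleftrightarrow> (dist x P)^2 \<le> (dist y P)^2"
    using abs_le_square_iff[of "dist x P" "dist y P"] by simp
  then show ?thesis unfolding distG by simp
qed

lemma Pi_iff: "A \<in> voronoi_poset S \<longleftrightarrow> A \<subseteq> S \<and> (\<exists>q. In A q)"
proof -
  have vr: "P \<in> voronoi_region S A \<longleftrightarrow> (\<forall>x\<in>A. \<forall>y\<in>S-A. dist x P \<le> dist y P)" for P
    by (simp add: voronoi_region_def halfplane_def)
  show ?thesis
  proof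
    assume "A \<in> voronoi_poset S"
    then have AS: "A \<subseteq> S" and "voronoi_region S A \<noteq> {}" unfolding voronoi_poset_def by auto
    then obtain P where "P \<in> voronoi_region S A" by blast
    define F where "F x = G x (P$1 - o1, P$2 - o2, 0)" for x
    have FF: "\<forall>x\<in>A. \<forall>y\<in>S-A. F x \<le> F y"
      using \<open>P \<in> voronoi_region S A\<close> unfolding vr F_def dist_le_G by blast
    have "\<exists>c. (\<forall>x\<in>A. F x \<le> c) \<and> (\<forall>y\<in>S-A. c \<le> F y)"
    proof (cases "A = {}")
      case True
      then show ?thesis using fin by (intro exI[of _ "Min (F ` S)"]) auto
    next
      case False
      have finA: "finite A" using AS fin finite_subset by blast
      have "Max (F ` A) \<in> F ` A" using False finA by simp
      then obtain x0 where "x0 \<in> A" "Max (F ` A) = F x0" by (metis imageE)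
      moreover have "\<forall>x\<in>A. F x \<le> Max (F ` A)" using finA by simp
      ultimately show ?thesis using FF by (intro exI[of _ "Max (F ` A)"]) auto
    qed
    then obtain c where c: "\<forall>x\<in>A. F x \<le> c" "\<forall>y\<in>S-A. c \<le> F y" by blast
    have "In A (P$1 - o1, P$2 - o2, c)" unfolding In_def
      using c by (subst (1 2) G_c) (auto simp: F_def)
    then show "A \<subseteq> S \<and> (\<exists>q. In A q)" using AS by blast
  next
    assume "A \<subseteq> S \<and> (\<exists>q. In A q)"
    then obtain q where AS: "A \<subseteq> S" and Iq: "In A q" by blast
    obtain a b c where q: "q = (a,b,c)" by (cases q) auto
    define P :: point where "P = vector [o1 + a, o2 + b]"
    have P: "P$1 - o1 = a" "P$2 - o2 = b" unfolding P_def by simp_all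
    have "\<forall>x\<in>A. \<forall>y\<in>S-A. dist x P \<le> dist y P"
    proof (intro ballI)
      fix x y assume "x \<in> A" "y \<in> S - A"
      then have "G x q \<le> 0" "0 \<le> G y q" using Iq unfolding In_def by auto
      then have "G x (a,b,0) \<le> G y (a,b,0)" unfolding q by (subst (asm) (1 2) G_c) simp
      then show "dist x P \<le> dist y P" unfolding dist_le_G P .
    qed
    then have "P \<in> voronoi_region S A" unfolding vr .
    then show "A \<in> voronoi_poset S" using AS unfolding voronoi_poset_def by auto
  qed
qed

definition opt where "opt \<sigma> A = (THE v. Opt \<sigma> A v)"
definition Phi where "Phi \<sigma> A = (A - T (opt \<sigma> A)) \<union> (T (opt \<sigma> A) - A)"

lemma opt_eq:
  assumes "\<sigma> = 1 \<or> \<sigma> = -1" "A \<subseteq> S" "Opt \<sigma> A v" "\<not> Ray \<sigma> A"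
  shows "opt \<sigma> A = v"
  unfolding opt_def using assms opt_unique by (intro the_equality) blast+

lemma Phi_props:
  assumes \<sigma>: "\<sigma> = 1 \<or> \<sigma> = -1" and A: "A \<in> voronoi_poset S" and nr: "\<not> Ray \<sigma> A"
  shows "Phi \<sigma> A \<in> voronoi_poset S \<and> \<not> Ray (-\<sigma>) (Phi \<sigma> A) \<and> Phi (-\<sigma>) (Phi \<sigma> A) = A
     \<and> (-1::real)^card (Phi \<sigma> A) = - ((-1)^card A)"
proof -
  have AS: "A \<subseteq> S" and "\<exists>q. In A q" using A Pi_iff by auto
  then obtain q0 where "In A q0" by blast
  obtain v where ov: "Opt \<sigma> A v" using opt_exists[OF \<sigma> AS \<open>In A q0\<close> nr] by blast
  have ev: "opt \<sigma> A = v" by (rule opt_eq[OF \<sigma> AS ov nr])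
  define A' where "A' = (A - T v) \<union> (T v - A)"
  have PA: "Phi \<sigma> A = A'" unfolding Phi_def ev A'_def ..
  have fl: "Opt (-\<sigma>) A' v" "\<not> Ray (-\<sigma>) A'" using flip[OF \<sigma> AS ov nr] unfolding A'_def by auto
  have A'S: "A' \<subseteq> S" using AS T_sub[of v] unfolding A'_def by auto
  have \<sigma>': "-\<sigma> = 1 \<or> -\<sigma> = -1" using \<sigma> by auto
  have "In A' v" using fl(1) unfolding Opt_def by simp
  then have A'P: "A' \<in> voronoi_poset S" using A'S Pi_iff by blast
  have ev': "opt (-\<sigma>) A' = v" by (rule opt_eq[OF \<sigma>' A'S fl])
  have "Phi (-\<sigma>) A' = (A' - T v) \<union> (T v - A')" unfolding Phi_def ev' ..
  also have "\<dots> = A" unfolding A'_def by auto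
  finally have inv: "Phi (-\<sigma>) A' = A" .
  have "card (T v) = 3" by (rule opt_T[OF \<sigma> AS ov nr])
  moreover have "finite A" using AS fin finite_subset by blast
  ultimately have "(-1::real)^card A' = - ((-1)^card A)"
    unfolding A'_def using T_fin by (intro parity_symdiff) auto
  then show ?thesis using PA A'P fl(2) inv by simp
qed

lemma main_sum:
  assumes odd: "odd (card S)"
  shows "(\<Sum>A\<in>voronoi_poset S. (-1::real)^card A) = 0"
proof -
  define P where "P = voronoi_poset S"
  define f :: "point set \<Rightarrow> real" where "f A = (-1)^card A" for A
  define R where "R \<sigma> = {A\<in>P. Ray \<sigma> A}" for \<sigma>
  define B where "B \<sigma> = {A\<in>P. \<not> Ray \<sigma> A}" for \<sigma>
  have finP: "finite P" unfolding P_def voronoi_poset_def using fin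
    by (rule finite_subset[rotated, OF finite_Pow_iff[THEN iffD2]]) auto
  have split: "sum f P = sum f (R \<sigma>) + sum f (B \<sigma>)" for \<sigma>
  proof -
    have "P = R \<sigma> \<union> B \<sigma>" "R \<sigma> \<inter> B \<sigma> = {}" unfolding R_def B_def by auto
    moreover have "finite (R \<sigma>)" "finite (B \<sigma>)" using finP unfolding R_def B_def by auto
    ultimately show ?thesis by (metis sum.union_disjoint)
  qed
  have m1: "(-1::real) = 1 \<or> (-1::real) = -1" "(1::real) = 1 \<or> (1::real) = -1" by simp_all
  have sB: "sum f (B 1) = sum (\<lambda>A. - f A) (B (-1))"
  proof (rule sum.reindex_bij_witness[where i="Phi (-1)" and j="Phi 1"])
    fix a assume "a \<in> B 1"
    then have a: "a \<in> voronoi_poset S" "\<not> Ray 1 a" unfolding B_def P_def by auto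
    note pp = Phi_props[OF m1(2) a]
    show "Phi (-1) (Phi 1 a) = a" using pp by simp
    show "Phi 1 a \<in> B (-1)" using pp unfolding B_def P_def by simp
    show "- f (Phi 1 a) = f a" using pp unfolding f_def by simp
  next
    fix b assume "b \<in> B (-1)"
    then have b: "b \<in> voronoi_poset S" "\<not> Ray (-1) b" unfolding B_def P_def by auto
    note pp = Phi_props[OF m1(1) b]
    show "Phi 1 (Phi (-1) b) = b" using pp by simp
    show "Phi (-1) b \<in> B 1" using pp unfolding B_def P_def by simp
  qed
  have sR: "sum f (R (-1)) = sum (\<lambda>A. - f A) (R 1)"
  proof (rule sum.reindex_bij_witness[where i="\<lambda>A. S - A" and j="\<lambda>A. S - A"])
    fix a assume "a \<in> R (-1)"
    then have a: "a \<in> voronoi_poset S" "Ray (-1) a" unfolding R_def P_def by auto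
    then have aS: "a \<subseteq> S" using Pi_iff by blast
    show "S - (S - a) = a" using aS by auto
    have r: "Ray 1 (S - a)" using ray_compl[OF aS, of "-1"] a(2) by simp
    then have "\<exists>q. In (S - a) q" using ray_In[of "S - a"] by blast
    then have "S - a \<in> voronoi_poset S" using Pi_iff by blast
    then show "S - a \<in> R 1" using r unfolding R_def P_def by simp
    have fa: "finite a" using aS fin finite_subset by blast
    have "card (S - a) = card S - card a" using aS fa by (simp add: card_Diff_subset)
    moreover have "card a \<le> card S" using aS fin by (simp add: card_mono)
    ultimately have "even (card (S - a)) \<longleftrightarrow> odd (card a)" using odd by presburger
    then show "- f (S - a) = f a" unfolding f_def by (simp add: minus_one_power_iff)
  next
    fix b assume "b \<in> R 1"
    then have b: "b \<in> voronoi_poset S" "Ray 1 b" unfolding R_def P_def by auto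
    then have bS: "b \<subseteq> S" using Pi_iff by blast
    show "S - (S - b) = b" using bS by auto
    have r: "Ray (-1) (S - b)" using ray_compl[OF bS, of 1] b(2) by simp
    then have "\<exists>q. In (S - b) q" using ray_In[of "S - b"] by blast
    then have "S - b \<in> voronoi_poset S" using Pi_iff by blast
    then show "S - b \<in> R (-1)" using r unfolding R_def P_def by simp
  qed
  have "sum f P = sum f (R 1) + sum f (B 1)" by (rule split)
  moreover have "sum f P = sum f (R (-1)) + sum f (B (-1))" by (rule split)
  moreover have "sum f (B 1) = - sum f (B (-1))" using sB by (simp add: sum_negf)
  moreover have "sum f (R (-1)) = - sum f (R 1)" using sR by (simp add: sum_negf)
  ultimately have "sum f P = 0" by linarith
  then show ?thesis unfolding P_def f_def .
qed

end

lemma gen_alg: "((a1::real) - o1)*(b2 - K * o1) - (b1 - o1)*(a2 - K * o1) = (a1*b2 - b1*a2) - o1*((b2-a2) + K*(a1-b1))"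
  by (simp add: algebra_simps)

lemma exists_origin:
  assumes "finite (S :: point set)"
  shows "\<exists>o1 o2. \<forall>x\<in>S. \<forall>y\<in>S. x \<noteq> y \<longrightarrow> (x$1-o1)*(y$2-o2) - (y$1-o1)*(x$2-o2) \<noteq> 0"
proof -
  define KS where "KS = (\<lambda>(x,y). (y$2 - x$2)/(y$1 - x$1)) ` (S \<times> S)"
  have "finite KS" unfolding KS_def using assms by simp
  then obtain K where K: "K \<notin> KS" using ex_new_if_finite[OF infinite_UNIV_char_0] by blast
  define m where "m x y = (y$2-x$2) + K*(x$1-y$1)" for x y :: point
  have mnz: "m x y \<noteq> 0" if "x\<in>S" "y\<in>S" "x\<noteq>y" for x y
  proof (cases "x$1 = y$1")
    case True
    then have "x$2 \<noteq> y$2" using that(3) by (metis exhaust_2 vec_eq_iff)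
    then show ?thesis using True unfolding m_def by simp
  next
    case False
    show ?thesis
    proof
      assume "m x y = 0"
      then have "K*(y$1-x$1) = y$2-x$2" unfolding m_def by (simp add: algebra_simps)
      then have "K = (y$2 - x$2)/(y$1 - x$1)" using False by (simp add: field_simps)
      then have "K \<in> KS" unfolding KS_def using that by force
      then show False using K by simp
    qed
  qed
  define OS where "OS = (\<lambda>(x,y). (x$1*y$2 - y$1*x$2) / m x y) ` (S \<times> S)"
  have "finite OS" unfolding OS_def using assms by simp
  then obtain o1 where o1: "o1 \<notin> OS" using ex_new_if_finite[OF infinite_UNIV_char_0] by blast
  have "\<forall>x\<in>S. \<forall>y\<in>S. x \<noteq> y \<longrightarrow> (x$1-o1)*(y$2-K * o1) - (y$1-o1)*(x$2-K * o1) \<noteq> 0"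
  proof (intro ballI impI)
    fix x y assume xy: "x\<in>S" "y\<in>S" "x\<noteq>y"
    show "(x$1-o1)*(y$2-K * o1) - (y$1-o1)*(x$2-K * o1) \<noteq> 0"
    proof
      assume "(x$1-o1)*(y$2-K * o1) - (y$1-o1)*(x$2-K * o1) = 0"
      then have "(x$1*y$2 - y$1*x$2) - o1 * m x y = 0" unfolding gen_alg m_def .
      then have "o1 = (x$1*y$2 - y$1*x$2) / m x y" using mnz[OF xy] by (simp add: field_simps)
      then have "o1 \<in> OS" unfolding OS_def using xy by force
      then show False using o1 by simp
    qed
  qed
  then show ?thesis by blast
qed

lemma powi_m1: "(-1::real) powi (int m - 1) = - ((-1)^m)"
proof (cases m)
  case 0 then show ?thesis by (simp add: power_int_minus)
next
  case (Suc k)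
  then have "int m - 1 = int k" by simp
  then show ?thesis using Suc by (simp add: power_int_of_nat)
qed

theorem mainTheorem9:
  fixes S :: "point set"
  assumes "finite S"
    and "card S \<ge> 3"
    and "odd (card S)"
    and "no_three_collinear S"
    and "no_four_cocircular S"
  shows "reduced_euler_char S = 0"
proof -
  obtain o1 o2 where g: "\<forall>x\<in>S. \<forall>y\<in>S. x \<noteq> y \<longrightarrow> (x$1-o1)*(y$2-o2) - (y$1-o1)*(x$2-o2) \<noteq> 0"
    using exists_origin[OF assms(1)] by blast
  interpret vor S o1 o2 using assms g by unfold_locales auto
  define P where "P = voronoi_poset S"
  have finP: "finite P" unfolding P_def voronoi_poset_def using assms(1)
    by (rule finite_subset[rotated, OF finite_Pow_iff[THEN iffD2]]) auto
  define I where "I = {-1..int (card S) - 1}"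
  define g where "g A = int (card A) - 1" for A :: "point set"
  define h where "h A = - ((-1::real)^card A)" for A :: "point set"
  have gI: "g ` P \<subseteq> I"
  proof
    fix i assume "i \<in> g ` P"
    then obtain A where A: "A \<in> P" "i = g A" by blast
    then have "A \<subseteq> S" unfolding P_def voronoi_poset_def by auto
    then have "card A \<le> card S" using assms(1) by (simp add: card_mono)
    then show "i \<in> I" using A unfolding I_def g_def by auto
  qed
  have "reduced_euler_char S = (\<Sum>i\<in>I. (\<Sum>A\<in>{A\<in>P. g A = i}. h A))"
    unfolding reduced_euler_char_def I_def[symmetric]
  proof (rule sum.cong[OF refl])
    fix i assume "i \<in> I"
    have e: "{A \<in> voronoi_poset S. int (card A) = i + 1} = {A\<in>P. g A = i}"
      unfolding P_def g_def by auto
    have "(-1) powi i * real (fbar S i) = (\<Sum>A\<in>{A\<in>P. g A = i}. (-1) powi i)"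
      unfolding fbar_def e by simp
    also have "\<dots> = (\<Sum>A\<in>{A\<in>P. g A = i}. h A)"
    proof (rule sum.cong[OF refl])
      fix A assume "A \<in> {A\<in>P. g A = i}"
      then have "i = int (card A) - 1" unfolding g_def by simp
      then show "(-1) powi i = h A" unfolding h_def by (simp add: powi_m1)
    qed
    finally show "(-1) powi i * real (fbar S i) = (\<Sum>A\<in>{A\<in>P. g A = i}. h A)" .
  qed
  also have "\<dots> = sum h P" using finP gI unfolding I_def by (intro sum.group) auto
  also have "\<dots> = - (\<Sum>A\<in>P. (-1::real)^card A)" unfolding h_def by (simp add: sum_negf)
  also have "\<dots> = 0" using main_sum[OF assms(3)] unfolding P_def by simp
  finally show ?thesis .
qed

end
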